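(* Let $L\subset\mathbb{Z}^m$ be a non-zero lattice with $L\cap\mathbb{N}^m=\{\mathbf 0\}$ and $\mathrm{Sat}(L)=\ker_{\mathbb{Z}}(\mathcal{A})$. Then $\mathcal{T}_{\min}=\mathcal{C}_{\min}$.
   Context: $K$ is a field, $\mathbf x^{\mathbf u}=x_1^{u_1}\cdots x_m^{u_m}$, $\mathbf u_\pm$ are the positive/negative parts of $\mathbf u\in\mathbb{Z}^m$, $I_L=(\mathbf x^{\mathbf u_+}-\mathbf x^{\mathbf u_-}:\mathbf u\in L)\subset K[x_1,\ldots,x_m]$, $\mathrm{Sat}(L)=\{\mathbf u:d\mathbf u\in L\text{ for some nonzero }d\in\mathbb{Z}\}$, $\mathcal{A}=\{\mathbf a_1,\ldots,\mathbf a_m\}\subset\mathbb{Z}^n$ and $\ker_{\mathbb{Z}}(\mathcal{A})=\{\mathbf q\in\mathbb{Z}^m:\sum q_i\mathbf a_i=0\}$. A circuit of $\mathcal{A}$ is a nonzero $\mathbf u\in\ker_{\mathbb{Z}}(\mathcal{A})$ with inclusion-minimal support $\mathrm{supp}(\mathbf u)=\{i:u_i\neq0\}$ among nonzero vectors of $\ker_{\mathbb{Z}}(\mathcal{A})$ and relatively prime coordinates. $\mathcal{C}$ is the set of all $E\subseteq\{1,\ldots,m\}$ with $E=\mathrm{supp}(\mathbf u_+)$ or $E=\mathrm{supp}(\mathbf u_-)$ for some circuit $\mathbf u$, and $\mathcal{C}_{\min}$ its inclusion-minimal elements. A monomial $M$ is indispensable of $I_L$ if every system of binomial generators of $I_L$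 contains a binomial having $M$ as a monomial; $\mathcal{T}_{\min}$ is the set of inclusion-minimal elements among the supports of indispensable monomials of $I_L$ (with $\mathrm{supp}(\mathbf x^{\mathbf w})=\mathrm{supp}(\mathbf w)$). *)

theory Defs
  imports Main "HOL-Library.Poly_Mapping"
begin

text \<open>Polynomial ring K[x_i : i in 'n] over a field, variables indexed by a finite type 'n
  (so m = CARD('n)); polynomials are finitely supported maps from exponent vectors to K.\<close>
type_synonym ('n, 'k) mpoly = "('n \<Rightarrow>\<^sub>0 nat) \<Rightarrow>\<^sub>0 'k"

definition monom_x :: "('n \<Rightarrow> nat) \<Rightarrow> ('n::finite, 'k::field) mpoly" where
  "monom_x w = Poly_Mapping.single (Abs_poly_mapping w) 1"

definition pos_part :: "('n \<Rightarrow> int) \<Rightarrow> 'n \<Rightarrow> nat" where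
  "pos_part u = (\<lambda>i. nat (u i))"

definition neg_part :: "('n \<Rightarrow> int) \<Rightarrow> 'n \<Rightarrow> nat" where
  "neg_part u = (\<lambda>i. nat (- u i))"

definition supp :: "('n \<Rightarrow> 'a::zero) \<Rightarrow> 'n set" where
  "supp u = {i. u i \<noteq> 0}"

definition ideal_gen :: "('a::comm_ring_1) set \<Rightarrow> 'a set" where
  "ideal_gen G = {\<Sum>g\<in>F. c g * g | F c. finite F \<and> F \<subseteq> G}"

definition is_lattice :: "('n \<Rightarrow> int) set \<Rightarrow> bool" where
  "is_lattice L \<longleftrightarrow> (\<lambda>i. 0) \<in> L \<and> (\<forall>u\<in>L. \<forall>v\<in>L. (\<lambda>i. u i + v i) \<in> L) \<and> (\<forall>u\<in>L. (\<lambda>i. - u i) \<in> L)"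

definition lattice_ideal :: "('n::finite \<Rightarrow> int) set \<Rightarrow> ('n, 'k::field) mpoly set" where
  "lattice_ideal L = ideal_gen {monom_x (pos_part u) - monom_x (neg_part u) | u. u \<in> L}"

definition Sat :: "('n \<Rightarrow> int) set \<Rightarrow> ('n \<Rightarrow> int) set" where
  "Sat L = {u. \<exists>d::int. d \<noteq> 0 \<and> (\<lambda>i. d * u i) \<in> L}"

text \<open>A configuration a_1..a_m in Z^n, given as A :: 'n \<Rightarrow> ('d \<Rightarrow> int).\<close>
definition kerZ :: "('n::finite \<Rightarrow> 'd \<Rightarrow> int) \<Rightarrow> ('n \<Rightarrow> int) set" where
  "kerZ A = {q. \<forall>j. (\<Sum>i\<in>UNIV. q i * A i j) = 0}"

definition is_circuit :: "('n::finite \<Rightarrow> 'd \<Rightarrow> int) \<Rightarrow> ('n \<Rightarrow> int) \<Rightarrow> bool" where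
  "is_circuit A u \<longleftrightarrow> u \<in> kerZ A \<and> u \<noteq> (\<lambda>i. 0) \<and>
     (\<forall>v\<in>kerZ A. v \<noteq> (\<lambda>i. 0) \<longrightarrow> supp v \<subseteq> supp u \<longrightarrow> supp v = supp u) \<and>
     (\<forall>d::int. (\<forall>i. d dvd u i) \<longrightarrow> is_unit d)"

definition minimal_sets :: "'a set set \<Rightarrow> 'a set set" where
  "minimal_sets S = {E\<in>S. \<forall>F\<in>S. F \<subseteq> E \<longrightarrow> F = E}"

definition circuit_supports :: "('n::finite \<Rightarrow> 'd \<Rightarrow> int) \<Rightarrow> 'n set set" where
  "circuit_supports A =
     {E. \<exists>u. is_circuit A u \<and> (E = supp (pos_part u) \<or> E = supp (neg_part u))}"

definition is_binomial :: "('n::finite, 'k::field) mpoly \<Rightarrow> bool" where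
  "is_binomial f \<longleftrightarrow> (\<exists>a b. a \<noteq> b \<and> f = monom_x a - monom_x b)"

definition indispensable_monomial :: "('n::finite, 'k::field) mpoly set \<Rightarrow> ('n \<Rightarrow> nat) \<Rightarrow> bool" where
  "indispensable_monomial I w \<longleftrightarrow>
     (\<forall>G. (\<forall>g\<in>G. is_binomial g) \<and> ideal_gen G = I \<longrightarrow>
        (\<exists>g\<in>G. Poly_Mapping.lookup g (Abs_poly_mapping w) \<noteq> 0))"

definition T_min :: "('n::finite \<Rightarrow> int) set \<Rightarrow> 'k::field itself \<Rightarrow> 'n set set" where
  "T_min L K = minimal_sets
     {supp w | w. indispensable_monomial (lattice_ideal L :: ('n, 'k) mpoly set) w}"

end

theory Submission
  imports Defs Complex_Main
begin


lemma lookup_Abs_fin[simp]: "Poly_Mapping.lookup (Abs_poly_mapping (w::'n::finite \<Rightarrow> 'a::zero)) = w"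
  by (simp add: lookup_Abs_poly_mapping)

lemma Abs_fin_inj: "Abs_poly_mapping (w::'n::finite\<Rightarrow>nat) = Abs_poly_mapping v \<Longrightarrow> w = v"
  by (metis lookup_Abs_fin)

lemma lookup_monom_x: "Poly_Mapping.lookup (monom_x w :: ('n::finite,'k::field) mpoly) k = (if k = Abs_poly_mapping w then 1 else 0)"
  by (simp add: monom_x_def lookup_single when_def)

lemma keys_monom_x: "Poly_Mapping.keys (monom_x w :: ('n::finite,'k::field) mpoly) = {Abs_poly_mapping w}"
  by (simp add: monom_x_def)

lemma gen_subset_ideal: "G \<subseteq> ideal_gen G"
proof
  fix g assume "g \<in> G"
  have "g = (\<Sum>h\<in>{g}. (\<lambda>_. 1) h * h)" by simp
  thus "g \<in> ideal_gen G" unfolding ideal_gen_def using \<open>g\<in>G\<close>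
    by (intro CollectI exI[of _ "{g}"] exI[of _ "\<lambda>_. 1"]) auto
qed

lemma ideal_gen_mono: "G \<subseteq> H \<Longrightarrow> ideal_gen G \<subseteq> ideal_gen H"
  unfolding ideal_gen_def by blast

lemma ideal_gen_insert0: "ideal_gen (insert 0 G) = ideal_gen G"
proof
  show "ideal_gen (insert 0 G) \<subseteq> ideal_gen G"
  proof
    fix f assume "f \<in> ideal_gen (insert 0 G)"
    then obtain F c where F: "finite F" "F \<subseteq> insert 0 G" "f = (\<Sum>g\<in>F. c g * g)"
      unfolding ideal_gen_def by blast
    have "f = (\<Sum>g\<in>F - {0}. c g * g)"
      using F by (metis (no_types, lifting) mult_zero_right sum.remove sum_diff1 add_0)
    moreover have "F - {0} \<subseteq> G" "finite (F - {0})" using F by auto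
    ultimately show "f \<in> ideal_gen G" unfolding ideal_gen_def by blast
  qed
  show "ideal_gen G \<subseteq> ideal_gen (insert 0 G)" by (rule ideal_gen_mono) auto
qed



lemma lookup_mult_fin:
  "Poly_Mapping.lookup (c * g) k = (\<Sum>l\<in>Poly_Mapping.keys c. \<Sum>q\<in>Poly_Mapping.keys g.
      (if k = l + q then Poly_Mapping.lookup c l * Poly_Mapping.lookup g q else (0::'k::field)))"
proof -
  have "Poly_Mapping.lookup (c * g) k = (\<Sum>l. Poly_Mapping.lookup c l * (\<Sum>q. Poly_Mapping.lookup g q when k = l + q))"
    by (rule lookup_mult)
  also have "\<dots> = (\<Sum>l\<in>Poly_Mapping.keys c. Poly_Mapping.lookup c l * (\<Sum>q. Poly_Mapping.lookup g q when k = l + q))"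
    by (rule Sum_any.expand_superset) (auto simp: in_keys_iff)
  also have "\<dots> = (\<Sum>l\<in>Poly_Mapping.keys c. Poly_Mapping.lookup c l * (\<Sum>q\<in>Poly_Mapping.keys g. Poly_Mapping.lookup g q when k = l + q))"
    by (intro sum.cong refl arg_cong2[where f="(*)"] Sum_any.expand_superset) (auto simp: in_keys_iff when_def)
  also have "\<dots> = (\<Sum>l\<in>Poly_Mapping.keys c. \<Sum>q\<in>Poly_Mapping.keys g.
      (if k = l + q then Poly_Mapping.lookup c l * Poly_Mapping.lookup g q else 0))"
    by (simp add: sum_distrib_left when_def) (intro sum.cong refl, auto)
  finally show ?thesis .
qed

definition clsP :: "('n \<Rightarrow> int) set \<Rightarrow> ('n \<Rightarrow> int) \<Rightarrow> ('n \<Rightarrow>\<^sub>0 nat) \<Rightarrow> bool" where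
  "clsP L r a \<longleftrightarrow> (\<lambda>i. int (Poly_Mapping.lookup a i) - r i) \<in> L"

definition psi :: "('n \<Rightarrow> int) set \<Rightarrow> ('n \<Rightarrow> int) \<Rightarrow> ('n, 'k::field) mpoly \<Rightarrow> 'k" where
  "psi L r f = (\<Sum>a\<in>Poly_Mapping.keys f. if clsP L r a then Poly_Mapping.lookup f a else 0)"

lemma psi_superset:
  assumes "finite S" "Poly_Mapping.keys f \<subseteq> S"
  shows "psi L r f = (\<Sum>a\<in>S. if clsP L r a then Poly_Mapping.lookup f a else 0)"
  unfolding psi_def
  by (rule sum.mono_neutral_left) (use assms in \<open>auto simp: in_keys_iff\<close>)

lemma psi_add: "psi L r (f + g) = psi L r f + psi L r g"
proof -
  let ?S = "Poly_Mapping.keys f \<union> Poly_Mapping.keys g"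
  have "psi L r (f + g) = (\<Sum>a\<in>?S. if clsP L r a then Poly_Mapping.lookup (f+g) a else 0)"
    by (rule psi_superset) (use keys_add[of f g] in auto)
  also have "\<dots> = (\<Sum>a\<in>?S. if clsP L r a then Poly_Mapping.lookup f a else 0)
                + (\<Sum>a\<in>?S. if clsP L r a then Poly_Mapping.lookup g a else 0)"
    by (simp add: Poly_Mapping.lookup_add sum.distrib[symmetric] if_distrib) (rule sum.cong, auto simp: Poly_Mapping.lookup_add)
  also have "\<dots> = psi L r f + psi L r g"
    by (subst (1 2) psi_superset[of ?S]) auto
  finally show ?thesis .
qed

lemma psi_zero[simp]: "psi L r 0 = 0"
  by (simp add: psi_def)

lemma psi_sum: "psi L r (\<Sum>g\<in>F. h g) = (\<Sum>g\<in>F. psi L r (h g))"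
  by (induction F rule: infinite_finite_induct) (auto simp: psi_add)

lemma psi_diff: "psi L r (f - g) = psi L r f - psi L r g"
proof -
  have "psi L r f = psi L r ((f - g) + g)" by simp
  also have "\<dots> = psi L r (f - g) + psi L r g" by (rule psi_add)
  finally show ?thesis by simp
qed

lemma psi_monom: "psi L r (monom_x w :: ('n::finite,'k::field) mpoly) =
   (if (\<lambda>i. int (w i) - r i) \<in> L then 1 else 0)"
  by (simp add: psi_def keys_monom_x lookup_monom_x clsP_def)

lemma psi_mult:
  fixes c g :: "('n::finite, 'k::field) mpoly"
  shows "psi L r (c * g) = (\<Sum>l\<in>Poly_Mapping.keys c. Poly_Mapping.lookup c l *
            psi L (\<lambda>i. r i - int (Poly_Mapping.lookup l i)) g)"
proof -
  let ?K = "(\<lambda>(l,q). l + q) ` (Poly_Mapping.keys c \<times> Poly_Mapping.keys g)"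
  have fK: "finite ?K" by auto
  have sub: "Poly_Mapping.keys (c * g) \<subseteq> ?K"
    using keys_mult[of c g] by auto
  have "psi L r (c * g) = (\<Sum>k\<in>?K. if clsP L r k then Poly_Mapping.lookup (c*g) k else 0)"
    by (rule psi_superset[OF fK sub])
  also have "\<dots> = (\<Sum>k\<in>?K. \<Sum>l\<in>Poly_Mapping.keys c. \<Sum>q\<in>Poly_Mapping.keys g.
      (if k = l + q \<and> clsP L r k then Poly_Mapping.lookup c l * Poly_Mapping.lookup g q else 0))"
    by (rule sum.cong) (auto simp: lookup_mult_fin)
  also have "\<dots> = (\<Sum>l\<in>Poly_Mapping.keys c. \<Sum>q\<in>Poly_Mapping.keys g. \<Sum>k\<in>?K.
      (if k = l + q \<and> clsP L r k then Poly_Mapping.lookup c l * Poly_Mapping.lookup g q else 0))"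
    by (subst sum.swap) (subst sum.swap, rule refl)
  also have "\<dots> = (\<Sum>l\<in>Poly_Mapping.keys c. \<Sum>q\<in>Poly_Mapping.keys g.
      (if clsP L r (l + q) then Poly_Mapping.lookup c l * Poly_Mapping.lookup g q else 0))"
  proof (intro sum.cong refl)
    fix l q assume lq: "l \<in> Poly_Mapping.keys c" "q \<in> Poly_Mapping.keys g"
    hence mem: "l + q \<in> ?K" by auto
    have "(\<Sum>k\<in>?K. (if k = l + q \<and> clsP L r k then Poly_Mapping.lookup c l * Poly_Mapping.lookup g q else 0))
        = (\<Sum>k\<in>?K. (if k = l + q then (if clsP L r (l+q) then Poly_Mapping.lookup c l * Poly_Mapping.lookup g q else 0) else 0))"
      by (rule sum.cong) auto
    also have "\<dots> = (if clsP L r (l+q) then Poly_Mapping.lookup c l * Poly_Mapping.lookup g q else 0)"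
      using mem fK by (simp add: sum.delta)
    finally show "(\<Sum>k\<in>?K. (if k = l + q \<and> clsP L r k then Poly_Mapping.lookup c l * Poly_Mapping.lookup g q else 0))
       = (if clsP L r (l+q) then Poly_Mapping.lookup c l * Poly_Mapping.lookup g q else 0)" .
  qed
  also have "\<dots> = (\<Sum>l\<in>Poly_Mapping.keys c. Poly_Mapping.lookup c l *
            psi L (\<lambda>i. r i - int (Poly_Mapping.lookup l i)) g)"
  proof (intro sum.cong refl)
    fix l
    have eq: "clsP L r (l + q) = clsP L (\<lambda>i. r i - int (Poly_Mapping.lookup l i)) q" for q
      unfolding clsP_def by (simp add: Poly_Mapping.lookup_add algebra_simps)
    show "(\<Sum>q\<in>Poly_Mapping.keys g. (if clsP L r (l + q) then Poly_Mapping.lookup c l * Poly_Mapping.lookup g q else 0))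
       = Poly_Mapping.lookup c l * psi L (\<lambda>i. r i - int (Poly_Mapping.lookup l i)) g"
      unfolding psi_def eq by (simp add: sum_distrib_left if_distrib) (intro sum.cong refl, auto)
  qed
  finally show ?thesis .
qed

lemma psi_ideal:
  fixes Gen :: "('n::finite, 'k::field) mpoly set"
  assumes "\<And>r h. h \<in> Gen \<Longrightarrow> psi L r h = 0"
    and "f \<in> ideal_gen Gen"
  shows "psi L r f = 0"
proof -
  obtain F c where F: "finite F" "F \<subseteq> Gen" "f = (\<Sum>g\<in>F. c g * g)"
    using assms(2) unfolding ideal_gen_def by blast
  show ?thesis unfolding F(3) psi_sum psi_mult
    using F(2) assms(1) by (auto intro!: sum.neutral)
qed



lemma lat_zero: "is_lattice L \<Longrightarrow> (\<lambda>i. 0) \<in> L"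
  unfolding is_lattice_def by blast
lemma lat_add: "is_lattice L \<Longrightarrow> u \<in> L \<Longrightarrow> v \<in> L \<Longrightarrow> (\<lambda>i. u i + v i) \<in> L"
  unfolding is_lattice_def by blast
lemma lat_neg: "is_lattice L \<Longrightarrow> u \<in> L \<Longrightarrow> (\<lambda>i. - u i) \<in> L"
  unfolding is_lattice_def by blast
lemma lat_diff: "is_lattice L \<Longrightarrow> u \<in> L \<Longrightarrow> v \<in> L \<Longrightarrow> (\<lambda>i. u i - v i) \<in> L"
  using lat_add[of L u "\<lambda>i. - v i"] lat_neg[of L v] by simp

lemma gen_psi:
  assumes L: "is_lattice L" and u: "u \<in> L"
  shows "psi L r (monom_x (pos_part u) - monom_x (neg_part u) :: ('n::finite,'k::field) mpoly) = 0"
proof -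
  have iff: "(\<lambda>i. int (pos_part u i) - r i) \<in> L \<longleftrightarrow> (\<lambda>i. int (neg_part u i) - r i) \<in> L"
  proof
    assume a: "(\<lambda>i. int (pos_part u i) - r i) \<in> L"
    have "(\<lambda>i. (int (pos_part u i) - r i) - u i) \<in> L" by (rule lat_diff[OF L a u])
    moreover have "(\<lambda>i. (int (pos_part u i) - r i) - u i) = (\<lambda>i. int (neg_part u i) - r i)"
      by (auto simp: pos_part_def neg_part_def)
    ultimately show "(\<lambda>i. int (neg_part u i) - r i) \<in> L" by simp
  next
    assume a: "(\<lambda>i. int (neg_part u i) - r i) \<in> L"
    have "(\<lambda>i. (int (neg_part u i) - r i) + u i) \<in> L" by (rule lat_add[OF L a u])
    moreover have "(\<lambda>i. (int (neg_part u i) - r i) + u i) = (\<lambda>i. int (pos_part u i) - r i)"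
      by (auto simp: pos_part_def neg_part_def)
    ultimately show "(\<lambda>i. int (pos_part u i) - r i) \<in> L" by simp
  qed
  show ?thesis by (simp add: psi_diff psi_monom iff)
qed

lemma lattice_ideal_psi:
  assumes L: "is_lattice L" and f: "f \<in> (lattice_ideal L :: ('n::finite,'k::field) mpoly set)"
  shows "psi L r f = 0"
  using f unfolding lattice_ideal_def
  by (rule psi_ideal[rotated]) (auto simp: gen_psi[OF L])

lemma binom_in:
  assumes L: "is_lattice L"
    and f: "(monom_x p - monom_x q :: ('n::finite,'k::field) mpoly) \<in> lattice_ideal L"
  shows "(\<lambda>i. int (p i) - int (q i)) \<in> L"
proof -
  let ?r = "\<lambda>i. int (p i)"
  have "psi L ?r (monom_x p - monom_x q :: ('n::finite,'k::field) mpoly) = 0"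
    by (rule lattice_ideal_psi[OF L f])
  hence "(\<lambda>i. int (q i) - int (p i)) \<in> L"
    using lat_zero[OF L] by (simp add: psi_diff psi_monom split: if_splits)
  from lat_neg[OF L this] show ?thesis by simp
qed



definition Pset :: "('n \<Rightarrow> int) set \<Rightarrow> 'n set set" where
  "Pset L = {supp (pos_part u) | u. u \<in> L \<and> u \<noteq> (\<lambda>i. 0)}"

lemma minimal_sets_iff: "E \<in> minimal_sets S \<longleftrightarrow> E \<in> S \<and> (\<forall>F\<in>S. F \<subseteq> E \<longrightarrow> F = E)"
  by (simp add: minimal_sets_def)

lemma min_sets_eq:
  assumes CP: "C \<subseteq> P" and ex: "\<forall>E\<in>P. \<exists>F\<in>C. F \<subseteq> E"
  shows "minimal_sets C = minimal_sets P"
proof (rule set_eqI)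
  fix E
  show "E \<in> minimal_sets C \<longleftrightarrow> E \<in> minimal_sets P"
  proof
    assume E: "E \<in> minimal_sets C"
    hence EC: "E \<in> C" "\<forall>F\<in>C. F \<subseteq> E \<longrightarrow> F = E" by (simp_all add: minimal_sets_iff)
    have "\<forall>F\<in>P. F \<subseteq> E \<longrightarrow> F = E"
    proof (intro ballI impI)
      fix F assume F: "F \<in> P" "F \<subseteq> E"
      obtain F' where F': "F' \<in> C" "F' \<subseteq> F" using ex F(1) by auto
      have "F' \<subseteq> E" using F'(2) F(2) by (rule subset_trans)
      hence "F' = E" using EC(2) F'(1) by simp
      thus "F = E" using F'(2) F(2) by simp
    qed
    moreover have "E \<in> P" using EC(1) CP by (rule rev_subsetD)
    ultimately show "E \<in> minimal_sets P" by (simp add: minimal_sets_iff)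
  next
    assume E: "E \<in> minimal_sets P"
    hence EP: "E \<in> P" "\<forall>F\<in>P. F \<subseteq> E \<longrightarrow> F = E" by (simp_all add: minimal_sets_iff)
    obtain F' where F': "F' \<in> C" "F' \<subseteq> E" using ex EP(1) by auto
    have "F' \<in> P" using F'(1) CP by (rule rev_subsetD)
    hence "F' = E" using EP(2) F'(2) by simp
    hence EC: "E \<in> C" using F' by simp
    have "\<forall>F\<in>C. F \<subseteq> E \<longrightarrow> F = E"
    proof (intro ballI impI)
      fix F assume "F \<in> C" "F \<subseteq> E"
      moreover have "F \<in> P" using \<open>F \<in> C\<close> CP by (rule rev_subsetD)
      ultimately show "F = E" using EP(2) by simp
    qed
    thus "E \<in> minimal_sets C" using EC by (simp add: minimal_sets_iff)
  qed
qed

lemma exists_min: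
  fixes P :: "'n::finite set set"
  shows "E \<in> P \<Longrightarrow> \<exists>F\<in>minimal_sets P. F \<subseteq> E"
proof (induction "card E" arbitrary: E rule: less_induct)
  case less
  show ?case
  proof (cases "E \<in> minimal_sets P")
    case True thus ?thesis by blast
  next
    case False
    then obtain F where F: "F \<in> P" "F \<subseteq> E" "F \<noteq> E"
      using less.prems unfolding minimal_sets_def by blast
    hence "card F < card E" by (simp add: psubset_card_mono psubsetI)
    from less.hyps[OF this F(1)] F(2) show ?thesis by blast
  qed
qed

lemma nat_neg_zero: "nat (x::int) = nat (- x) \<Longrightarrow> x = 0" by (cases "x \<ge> 0") auto

lemma pos_neg_ne: "u \<noteq> (\<lambda>i. 0) \<Longrightarrow> pos_part u \<noteq> neg_part u"
proof
  assume a: "u \<noteq> (\<lambda>i. 0)" "pos_part u = neg_part u"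
  have "nat (u i) = nat (- u i)" for i using a(2) by (simp add: pos_part_def neg_part_def fun_eq_iff)
  hence "u i = 0" for i by (rule nat_neg_zero)
  with a(1) show False by auto
qed

lemma pos_part_neg: "pos_part (\<lambda>i. - u i) = neg_part u"
  by (simp add: pos_part_def neg_part_def)


lemma B1:
  assumes L: "is_lattice L"
    and ind: "indispensable_monomial (lattice_ideal L :: ('n::finite,'k::field) mpoly set) w"
  shows "supp w \<in> Pset L"
proof -
  define G0 :: "('n,'k) mpoly set" where "G0 = {monom_x (pos_part u) - monom_x (neg_part u) | u. u \<in> L \<and> u \<noteq> (\<lambda>i. 0)}"
  have gen: "{monom_x (pos_part u) - monom_x (neg_part u) | u. u \<in> L} = insert (0::('n,'k) mpoly) G0"
  proof (rule set_eqI)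
    fix x :: "('n,'k) mpoly"
    have z: "monom_x (pos_part (\<lambda>i. 0::int)) - monom_x (neg_part (\<lambda>i. 0::int)) = (0::('n,'k) mpoly)"
      by (simp add: pos_part_def neg_part_def)
    show "x \<in> {monom_x (pos_part u) - monom_x (neg_part u) | u. u \<in> L} \<longleftrightarrow> x \<in> insert 0 G0"
    proof
      assume "x \<in> {monom_x (pos_part u) - monom_x (neg_part u) | u. u \<in> L}"
      then obtain u where u: "u \<in> L" "x = monom_x (pos_part u) - monom_x (neg_part u)" by blast
      show "x \<in> insert 0 G0"
      proof (cases "u = (\<lambda>i. 0)")
        case True thus ?thesis using z \<open>x = _\<close> by simp
      next
        case False
        have "x \<in> G0" unfolding G0_def using \<open>u \<in> L\<close> False \<open>x = _\<close> by blast
        thus ?thesis by simp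
      qed
    next
      assume "x \<in> insert 0 G0"
      thus "x \<in> {monom_x (pos_part u) - monom_x (neg_part u) | u. u \<in> L}"
      proof
        assume "x = 0"
        thus ?thesis using z lat_zero[OF L] by (intro CollectI exI[of _ "\<lambda>i. 0"]) simp
      next
        assume "x \<in> G0"
        thus ?thesis unfolding G0_def by blast
      qed
    qed
  qed
  have "ideal_gen G0 = lattice_ideal L"
    unfolding lattice_ideal_def gen ideal_gen_insert0 ..
  moreover have "\<forall>g\<in>G0. is_binomial g"
  proof
    fix g assume "g \<in> G0"
    then obtain u where "u \<noteq> (\<lambda>i. 0)" "g = monom_x (pos_part u) - monom_x (neg_part u)"
      unfolding G0_def by blast
    thus "is_binomial g" unfolding is_binomial_def using pos_neg_ne by blast
  qed
  ultimately obtain g where g: "g \<in> G0" "Poly_Mapping.lookup g (Abs_poly_mapping w) \<noteq> 0"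
  proof -
    assume "\<And>g. g \<in> G0 \<Longrightarrow> Poly_Mapping.lookup g (Abs_poly_mapping w) \<noteq> 0 \<Longrightarrow> thesis"
    moreover have "\<exists>g\<in>G0. Poly_Mapping.lookup g (Abs_poly_mapping w) \<noteq> 0"
      using ind[unfolded indispensable_monomial_def, rule_format, of G0] calculation \<open>ideal_gen G0 = _\<close> \<open>\<forall>g\<in>G0. _\<close>
      by simp
    ultimately show thesis by blast
  qed
  then obtain u where u: "u \<in> L" "u \<noteq> (\<lambda>i. 0)" "g = monom_x (pos_part u) - monom_x (neg_part u)"
    unfolding G0_def by blast
  have "Abs_poly_mapping w = Abs_poly_mapping (pos_part u) \<or> Abs_poly_mapping w = Abs_poly_mapping (neg_part u)"
    using g(2) unfolding u(3) by (auto simp: lookup_minus lookup_monom_x split: if_splits)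
  hence "w = pos_part u \<or> w = pos_part (\<lambda>i. - u i)"
    using Abs_fin_inj[of w] pos_part_neg[of u] by auto
  moreover have "(\<lambda>i. - u i) \<in> L" "(\<lambda>i. - u i) \<noteq> (\<lambda>i. 0)"
    using lat_neg[OF L u(1)] u(2) by (auto simp: fun_eq_iff)
  ultimately show ?thesis unfolding Pset_def using u(1,2)
    by (elim disjE conjE) (rule CollectI, blast)+
qed


lemma le_sum_eq:
  fixes f g :: "'n::finite \<Rightarrow> nat"
  assumes "\<forall>i. f i \<le> g i" "sum g UNIV \<le> sum f UNIV"
  shows "f = g"
proof (rule ccontr)
  assume "f \<noteq> g"
  then obtain j where "f j \<noteq> g j" by auto
  with assms have "f j < g j" by (simp add: order_less_le)
  hence "sum f UNIV < sum g UNIV"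
    using assms(1) by (intro sum_strict_mono_ex1) auto
  with assms(2) show False by simp
qed

lemma B2:
  assumes L: "is_lattice L" and E: "E \<in> minimal_sets (Pset L)"
  shows "\<exists>w. indispensable_monomial (lattice_ideal L :: ('n::finite,'k::field) mpoly set) w \<and> supp w = E"
proof -
  define Cands where "Cands = {u. u \<in> L \<and> u \<noteq> (\<lambda>i. 0) \<and> supp (pos_part u) = E}"
  have "\<exists>u. u \<in> Cands" using E unfolding minimal_sets_def Pset_def Cands_def by blast
  then obtain u where u: "u \<in> Cands" and umin: "\<And>v. v \<in> Cands \<Longrightarrow> sum (pos_part u) UNIV \<le> sum (pos_part v) UNIV"
    using ex_has_least_nat[of "\<lambda>u. u \<in> Cands" _ "\<lambda>u. sum (pos_part u) UNIV"] by metis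
  define w where "w = pos_part u"
  have core: "p = w" if pq: "(\<lambda>i. int (p i) - int (q i)) \<in> L" "p \<noteq> q" "\<forall>i. p i \<le> w i" for p q
  proof -
    define v where "v = (\<lambda>i. int (p i) - int (q i))"
    have vL: "v \<in> L" using pq v_def by simp
    have v0: "v \<noteq> (\<lambda>i. 0)"
    proof
      assume "v = (\<lambda>i. 0)" hence "\<forall>i. p i = q i" unfolding v_def by (metis of_nat_eq_iff right_minus_eq)
      with pq(2) show False by auto
    qed
    have pv: "pos_part v i \<le> p i" for i unfolding pos_part_def v_def by auto
    have sub: "supp (pos_part v) \<subseteq> E"
    proof -
      have "supp (pos_part v) \<subseteq> supp w" unfolding supp_def using pv pq(3)
        by (metis (mono_tags, lifting) Collect_mono le_zero_eq)
      thus ?thesis using u unfolding w_def Cands_def by simp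
    qed
    have "supp (pos_part v) \<in> Pset L" unfolding Pset_def using vL v0 by blast
    hence "supp (pos_part v) = E" using E sub unfolding minimal_sets_def by blast
    hence "v \<in> Cands" unfolding Cands_def using vL v0 by blast
    hence "sum (pos_part u) UNIV \<le> sum (pos_part v) UNIV" by (rule umin)
    moreover have "\<forall>i. pos_part v i \<le> pos_part u i" using pv pq(3) w_def le_trans by metis
    ultimately have "pos_part v = pos_part u" by (intro le_sum_eq) auto
    thus "p = w" using pv pq(3) unfolding w_def by (metis le_antisym ext)
  qed
  have "indispensable_monomial (lattice_ideal L :: ('n,'k) mpoly set) w"
    unfolding indispensable_monomial_def
  proof (intro allI impI)
    fix G :: "('n,'k) mpoly set"
    assume G: "(\<forall>g\<in>G. is_binomial g) \<and> ideal_gen G = lattice_ideal L"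
    let ?h = "monom_x (pos_part u) - monom_x (neg_part u) :: ('n,'k) mpoly"
    have uL: "u \<in> L" "u \<noteq> (\<lambda>i. 0)" using u unfolding Cands_def by auto
    have "?h \<in> lattice_ideal L" unfolding lattice_ideal_def
      by (rule subsetD[OF gen_subset_ideal]) (use uL in blast)
    hence "?h \<in> ideal_gen G" using G by simp
    then obtain F c where F: "finite F" "F \<subseteq> G" "?h = (\<Sum>g\<in>F. c g * g)"
      unfolding ideal_gen_def by blast
    have "Poly_Mapping.lookup ?h (Abs_poly_mapping w) = 1"
      using pos_neg_ne[OF uL(2)] Abs_fin_inj unfolding w_def
      by (auto simp: lookup_minus lookup_monom_x)
    hence "(\<Sum>g\<in>F. Poly_Mapping.lookup (c g * g) (Abs_poly_mapping w)) \<noteq> 0"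
      unfolding F(3) lookup_sum by simp
    then obtain g where g: "g \<in> F" "Poly_Mapping.lookup (c g * g) (Abs_poly_mapping w) \<noteq> 0"
      by (meson sum.neutral)
    hence "Abs_poly_mapping w \<in> Poly_Mapping.keys (c g * g)" by (simp add: in_keys_iff)
    then obtain a b where ab: "Abs_poly_mapping w = a + b" "b \<in> Poly_Mapping.keys g"
      using keys_mult[of "c g" g] by blast
    have gG: "g \<in> G" using g F by auto
    then obtain p q where pq: "p \<noteq> q" "g = monom_x p - monom_x q"
      using G unfolding is_binomial_def by blast
    have gI: "g \<in> lattice_ideal L" using gG G gen_subset_ideal by blast
    have d1: "(\<lambda>i. int (p i) - int (q i)) \<in> L" using binom_in[OF L] gI pq(2) by blast
    have d2: "(\<lambda>i. int (q i) - int (p i)) \<in> L" using lat_neg[OF L d1] by simp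
    have ble: "\<forall>i. Poly_Mapping.lookup b i \<le> w i"
    proof
      fix i
      have "w i = Poly_Mapping.lookup a i + Poly_Mapping.lookup b i"
        using arg_cong[OF ab(1), of "\<lambda>x. Poly_Mapping.lookup x i"] by (simp add: Poly_Mapping.lookup_add)
      thus "Poly_Mapping.lookup b i \<le> w i" by simp
    qed
    have Apq: "Abs_poly_mapping p \<noteq> Abs_poly_mapping q" using pq(1) Abs_fin_inj by metis
    have "b = Abs_poly_mapping p \<or> b = Abs_poly_mapping q"
      using ab(2) unfolding pq(2) by (auto simp: in_keys_iff lookup_minus lookup_monom_x split: if_splits)
    thus "\<exists>g\<in>G. Poly_Mapping.lookup g (Abs_poly_mapping w) \<noteq> 0"
    proof
      assume "b = Abs_poly_mapping p"
      hence "p = w" using core[OF d1 pq(1)] ble by simp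
      hence "Poly_Mapping.lookup g (Abs_poly_mapping w) = 1"
        using Apq unfolding pq(2) by (simp add: Poly_Mapping.lookup_minus lookup_monom_x)
      thus ?thesis using gG by (intro bexI[of _ g]) simp_all
    next
      assume "b = Abs_poly_mapping q"
      hence "q = w" using core[OF d2 pq(1)[symmetric]] ble by simp
      hence "Poly_Mapping.lookup g (Abs_poly_mapping w) = -1"
        using Apq unfolding pq(2) by (simp add: Poly_Mapping.lookup_minus lookup_monom_x)
      thus ?thesis using gG by (intro bexI[of _ g]) simp_all
    qed
  qed
  moreover have "supp w = E" using u unfolding w_def Cands_def by simp
  ultimately show ?thesis by blast
qed

lemma T_min_Pset:
  assumes L: "is_lattice L"
  shows "T_min L TYPE('k::field) = minimal_sets (Pset (L :: ('n::finite \<Rightarrow> int) set))"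
proof -
  let ?S = "{supp w | w. indispensable_monomial (lattice_ideal L :: ('n,'k) mpoly set) w}"
  have "?S \<subseteq> Pset L" using B1[OF L] by blast
  moreover have "\<forall>E\<in>Pset L. \<exists>F\<in>?S. F \<subseteq> E"
  proof
    fix E assume "E \<in> Pset L"
    then obtain F where F: "F \<in> minimal_sets (Pset L)" "F \<subseteq> E" using exists_min by blast
    from B2[OF L F(1)] have "F \<in> ?S" by (metis (mono_tags, lifting) mem_Collect_eq)
    thus "\<exists>F\<in>?S. F \<subseteq> E" using F(2) by blast
  qed
  ultimately show ?thesis unfolding T_min_def by (rule min_sets_eq)
qed



lemma kerZ_lin:
  assumes "u \<in> kerZ A" "v \<in> kerZ A"
  shows "(\<lambda>i. a * u i - b * v i) \<in> kerZ A"
proof -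
  have "(\<Sum>i\<in>UNIV. (a * u i - b * v i) * A i j) = a * (\<Sum>i\<in>UNIV. u i * A i j) - b * (\<Sum>i\<in>UNIV. v i * A i j)" for j
    by (simp add: left_diff_distrib sum_subtractf sum_distrib_left mult.assoc)
  thus ?thesis using assms unfolding kerZ_def by simp
qed

lemma kerZ_neg: "u \<in> kerZ A \<Longrightarrow> (\<lambda>i. - u i) \<in> kerZ A"
  using kerZ_lin[of u A u 0 1] by simp

lemma kerZ_scale: "u \<in> kerZ A \<Longrightarrow> (\<lambda>i. d * u i) \<in> kerZ A"
  using kerZ_lin[of u A u d 0] by simp

definition Pk :: "('n::finite \<Rightarrow> 'd::finite \<Rightarrow> int) \<Rightarrow> 'n set set" where
  "Pk A = {supp (pos_part u) | u. u \<in> kerZ A \<and> u \<noteq> (\<lambda>i. 0)}"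

lemma supp_pos_scale: "(d::int) > 0 \<Longrightarrow> supp (pos_part (\<lambda>i. d * u i)) = supp (pos_part u)"
  unfolding supp_def pos_part_def by (auto simp: zero_less_mult_iff not_le mult_le_0_iff)

lemma Pset_Pk:
  assumes L: "is_lattice L" and S: "Sat L = kerZ A"
  shows "Pset L = Pk A"
proof (rule set_eqI)
  fix E
  show "E \<in> Pset L \<longleftrightarrow> E \<in> Pk A"
  proof
    assume "E \<in> Pset L"
    then obtain u where u: "u \<in> L" "u \<noteq> (\<lambda>i. 0)" "E = supp (pos_part u)"
      unfolding Pset_def by blast
    have "u \<in> Sat L" unfolding Sat_def using u(1) by (intro CollectI exI[of _ 1]) simp
    thus "E \<in> Pk A" unfolding Pk_def using S u(2,3) by blast
  next
    assume "E \<in> Pk A"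
    then obtain u where u: "u \<in> kerZ A" "u \<noteq> (\<lambda>i. 0)" "E = supp (pos_part u)"
      unfolding Pk_def by blast
    then obtain d :: int where d: "d \<noteq> 0" "(\<lambda>i. d * u i) \<in> L"
      using S unfolding Sat_def by blast
    have dL: "(\<lambda>i. \<bar>d\<bar> * u i) \<in> L"
    proof (cases "d > 0")
      case True thus ?thesis using d(2) by simp
    next
      case False
      hence "(\<lambda>i. \<bar>d\<bar> * u i) = (\<lambda>i. - (d * u i))" using d(1) by auto
      thus ?thesis using lat_neg[OF L d(2)] by simp
    qed
    have nz: "(\<lambda>i. \<bar>d\<bar> * u i) \<noteq> (\<lambda>i. 0)"
    proof
      assume "(\<lambda>i. \<bar>d\<bar> * u i) = (\<lambda>i. 0)"
      hence "u i = 0" for i using d(1) by (metis mult_eq_0_iff abs_eq_0)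
      with u(2) show False by auto
    qed
    have "E = supp (pos_part (\<lambda>i. \<bar>d\<bar> * u i))" using supp_pos_scale[of "\<bar>d\<bar>" u] d(1) u(3) by simp
    thus "E \<in> Pset L" unfolding Pset_def using dL nz by blast
  qed
qed

lemma circ_of_min:
  fixes A :: "'n::finite \<Rightarrow> 'd::finite \<Rightarrow> int"
  assumes uK: "u \<in> kerZ A" and u0: "u \<noteq> (\<lambda>i. 0)"
    and umin: "\<forall>v\<in>kerZ A. v \<noteq> (\<lambda>i. 0) \<longrightarrow> supp v \<subseteq> supp u \<longrightarrow> supp v = supp u"
  shows "\<exists>c. is_circuit A c \<and> (\<forall>i. c i > 0 \<longrightarrow> u i > 0)"
proof -
  define g where "g = Gcd (range u)"
  have "\<not> range u \<subseteq> {0}" using u0 by auto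
  hence g0: "g \<noteq> 0" unfolding g_def by (simp add: Gcd_0_iff)
  have gpos: "g > 0" using g0 Gcd_int_greater_eq_0[of "range u"] unfolding g_def by linarith
  have "\<forall>i. \<exists>k. u i = g * k" unfolding g_def by (metis Gcd_dvd rangeI dvdE)
  then obtain c where c: "\<And>i. u i = g * c i" by metis
  have cK: "c \<in> kerZ A"
  proof -
    have "g * (\<Sum>i\<in>UNIV. c i * A i j) = (\<Sum>i\<in>UNIV. u i * A i j)" for j
      by (simp add: c sum_distrib_left mult.assoc)
    thus ?thesis using uK g0 unfolding kerZ_def by simp
  qed
  have sc: "supp c = supp u" unfolding supp_def using c g0 by auto
  have c0: "c \<noteq> (\<lambda>i. 0)" using u0 c by auto
  have gcdc: "\<forall>d::int. (\<forall>i. d dvd c i) \<longrightarrow> is_unit d"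
  proof (intro allI impI)
    fix d :: int assume d: "\<forall>i. d dvd c i"
    have h: "\<forall>i. d * g dvd u i" using d c by (metis mult.commute mult_dvd_mono dvd_refl)
    have "d * g dvd Gcd (range u)" by (rule Gcd_greatest) (use h in blast)
    hence "d * g dvd g" unfolding g_def .
    hence "d * g dvd 1 * g" by simp
    thus "is_unit d" using g0 dvd_times_right_cancel_iff[of g d 1] by simp
  qed
  have "is_circuit A c" unfolding is_circuit_def using cK c0 gcdc umin sc by simp
  moreover have "\<forall>i. c i > 0 \<longrightarrow> u i > 0" using c gpos by simp
  ultimately show ?thesis by blast
qed



lemma cross_sign:
  fixes a b x y :: int
  assumes a: "a > 0" and b: "b > 0" and xy: "x * y > 0" and cr: "b * \<bar>y\<bar> \<le> \<bar>x\<bar> * a"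
  shows "(a * x - b * y > 0 \<longrightarrow> x > 0) \<and> (a * x - b * y < 0 \<longrightarrow> x < 0)"
proof (cases "x > 0")
  case True
  hence "y > 0" using xy by (simp add: zero_less_mult_iff)
  hence "b * y \<le> a * x" using cr True by (simp add: mult.commute)
  thus ?thesis using True by simp
next
  case False
  hence x: "x < 0" using xy by (cases "x = 0") auto
  hence "y < 0" using xy by (simp add: zero_less_mult_iff)
  hence "b * (- y) \<le> a * (- x)" using cr x by (simp add: mult.commute)
  thus ?thesis using x by simp
qed

lemma noncross_sign:
  fixes a b x y :: int
  assumes a: "a > 0" and b: "b > 0" and xy: "\<not> x * y > 0" and x0: "x \<noteq> 0"
  shows "(a * x - b * y > 0 \<longrightarrow> x > 0) \<and> (a * x - b * y < 0 \<longrightarrow> x < 0)"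
proof (cases "x > 0")
  case True
  hence "y \<le> 0" using xy by (metis mult_pos_pos not_le)
  hence "a * x > 0" "b * y \<le> 0" using a b True by (simp_all add: mult_pos_pos mult_nonneg_nonpos less_imp_le)
  thus ?thesis using True by simp
next
  case False
  hence x: "x < 0" using x0 by simp
  hence "y \<ge> 0" using xy by (metis mult_neg_neg not_le)
  hence "a * x < 0" "b * y \<ge> 0" using a b x by (simp_all add: mult_pos_neg)
  thus ?thesis using x by simp
qed

lemma conformal:
  fixes A :: "'n::finite \<Rightarrow> 'd::finite \<Rightarrow> int"
  shows "u \<in> kerZ A \<Longrightarrow> u \<noteq> (\<lambda>i. 0) \<Longrightarrow> \<exists>c. is_circuit A c \<and> (\<forall>i. c i > 0 \<longrightarrow> u i > 0)"
proof (induction "card (supp u)" arbitrary: u rule: less_induct)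
  case less
  show ?case
  proof (cases "\<forall>v\<in>kerZ A. v \<noteq> (\<lambda>i. 0) \<longrightarrow> supp v \<subseteq> supp u \<longrightarrow> supp v = supp u")
    case True thus ?thesis using circ_of_min less.prems by blast
  next
    case False
    then obtain v where v: "v \<in> kerZ A" "v \<noteq> (\<lambda>i. 0)" "supp v \<subseteq> supp u" "supp v \<noteq> supp u"
      by blast
    obtain j where j: "v j \<noteq> 0" using v(2) by auto
    hence uj: "u j \<noteq> 0" using v(3) unfolding supp_def by auto
    define v' where "v' = (if u j * v j > 0 then v else (\<lambda>i. - v i))"
    have v'K: "v' \<in> kerZ A" unfolding v'_def using v(1) kerZ_neg[OF v(1)] by simp
    have v'supp: "supp v' = supp v" unfolding v'_def supp_def by auto
    have jS: "u j * v' j > 0"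
    proof (cases "u j * v j > 0")
      case True thus ?thesis unfolding v'_def by simp
    next
      case False
      hence "u j * v j < 0" using j uj by (metis linorder_neqE_linordered_idom mult_eq_0_iff)
      thus ?thesis using False unfolding v'_def by simp
    qed
    define S where "S = {i. u i * v' i > 0}"
    have fS: "finite S" by simp
    have jS': "j \<in> S" unfolding S_def using jS by simp
    define f where "f i = real_of_int \<bar>u i\<bar> / real_of_int \<bar>v' i\<bar>" for i
    define m where "m = Min (f ` S)"
    have "m \<in> f ` S" unfolding m_def using fS jS' by (intro Min_in) auto
    then obtain k where k: "k \<in> S" "f k = m" by blast
    have kmin: "f k \<le> f i" if "i \<in> S" for i
      unfolding k(2) m_def using fS that by (intro Min_le) auto
    have Snz: "u i \<noteq> 0" "v' i \<noteq> 0" if "i \<in> S" for i using that unfolding S_def by auto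
    define a where "a = \<bar>v' k\<bar>"
    define b where "b = \<bar>u k\<bar>"
    have a: "a > 0" and b: "b > 0" unfolding a_def b_def using Snz[OF k(1)] by auto
    have cross: "b * \<bar>v' i\<bar> \<le> \<bar>u i\<bar> * a" if "i \<in> S" for i
    proof -
      have pv: "real_of_int \<bar>v' i\<bar> > 0" "real_of_int \<bar>v' k\<bar> > 0" using Snz that k(1) by auto
      have "real_of_int \<bar>u k\<bar> / real_of_int \<bar>v' k\<bar> \<le> real_of_int \<bar>u i\<bar> / real_of_int \<bar>v' i\<bar>"
        using kmin[OF that] unfolding f_def .
      hence "real_of_int \<bar>u k\<bar> * real_of_int \<bar>v' i\<bar> \<le> real_of_int \<bar>u i\<bar> * real_of_int \<bar>v' k\<bar>"
        using pv by (simp add: divide_le_eq le_divide_eq mult.commute mult.left_commute)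
      hence "real_of_int (\<bar>u k\<bar> * \<bar>v' i\<bar>) \<le> real_of_int (\<bar>u i\<bar> * \<bar>v' k\<bar>)" by simp
      thus ?thesis unfolding a_def b_def by linarith
    qed
    define w where "w = (\<lambda>i. a * u i - b * v' i)"
    have wK: "w \<in> kerZ A" unfolding w_def using less.prems(1) v'K by (rule kerZ_lin)
    have sgn: "(w i > 0 \<longrightarrow> u i > 0) \<and> (w i < 0 \<longrightarrow> u i < 0)" for i
    proof (cases "u i = 0")
      case True
      hence "i \<notin> supp v'" using v(3) v'supp unfolding supp_def by auto
      hence "v' i = 0" unfolding supp_def by simp
      thus ?thesis using True unfolding w_def by simp
    next
      case False
      show ?thesis
      proof (cases "i \<in> S")
        case True
        hence "u i * v' i > 0" unfolding S_def by simp
        from cross_sign[OF a b this cross[OF True]] show ?thesis unfolding w_def .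
      next
        case nS: False
        hence "\<not> u i * v' i > 0" unfolding S_def by simp
        from noncross_sign[OF a b this False] show ?thesis unfolding w_def .
      qed
    qed
    have suppw: "supp w \<subseteq> supp u"
    proof
      fix i assume "i \<in> supp w"
      hence "w i \<noteq> 0" unfolding supp_def by simp
      hence "u i \<noteq> 0" using sgn[of i] by (cases "w i > 0") auto
      thus "i \<in> supp u" unfolding supp_def by simp
    qed
    have wk: "w k = 0"
    proof -
      have "u k * v' k > 0" using k(1) unfolding S_def by simp
      hence "(u k > 0 \<and> v' k > 0) \<or> (u k < 0 \<and> v' k < 0)" by (simp add: zero_less_mult_iff)
      thus ?thesis unfolding w_def a_def b_def by (auto simp: mult.commute)
    qed
    have kin: "k \<in> supp u" using Snz(1)[OF k(1)] unfolding supp_def by simp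
    have kout: "k \<notin> supp w" using wk unfolding supp_def by simp
    have psub: "supp w \<subset> supp u" using suppw kin kout by blast
    have cardlt: "card (supp w) < card (supp u)" by (rule psubset_card_mono) (simp_all add: psub)
    have w0: "w \<noteq> (\<lambda>i. 0)"
    proof
      assume "w = (\<lambda>i. 0)"
      hence eq: "a * u i = b * v' i" for i unfolding w_def by (metis right_minus_eq)
      have "supp u \<subseteq> supp v'"
      proof
        fix i assume "i \<in> supp u"
        hence "a * u i \<noteq> 0" using a unfolding supp_def by simp
        hence "v' i \<noteq> 0" using eq[of i] by auto
        thus "i \<in> supp v'" unfolding supp_def by simp
      qed
      thus False using v(3,4) v'supp by blast
    qed
    obtain c where c: "is_circuit A c" "\<forall>i. c i > 0 \<longrightarrow> w i > 0"
      using less.hyps[OF cardlt wK w0] by blast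
    have "\<forall>i. c i > 0 \<longrightarrow> u i > 0" using c(2) sgn by blast
    thus ?thesis using c(1) by blast
  qed
qed

lemma circ_in_Pk: "E \<in> circuit_supports A \<Longrightarrow> E \<in> Pk A"
proof -
  assume "E \<in> circuit_supports A"
  then obtain u where u: "is_circuit A u" "E = supp (pos_part u) \<or> E = supp (neg_part u)"
    unfolding circuit_supports_def by blast
  have uK: "u \<in> kerZ A" "u \<noteq> (\<lambda>i. 0)" using u(1) unfolding is_circuit_def by auto
  have nK: "(\<lambda>i. - u i) \<in> kerZ A" "(\<lambda>i. - u i) \<noteq> (\<lambda>i. 0)"
    using kerZ_neg[OF uK(1)] uK(2) by (auto simp: fun_eq_iff)
  from u(2) show "E \<in> Pk A"
  proof
    assume "E = supp (pos_part u)" thus ?thesis unfolding Pk_def using uK by blast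
  next
    assume "E = supp (neg_part u)"
    hence "E = supp (pos_part (\<lambda>i. - u i))" by (simp add: pos_part_neg)
    thus ?thesis unfolding Pk_def using nK by blast
  qed
qed

lemma Pk_has_circ: "E \<in> Pk A \<Longrightarrow> \<exists>F\<in>circuit_supports A. F \<subseteq> E"
proof -
  assume "E \<in> Pk A"
  then obtain u where u: "u \<in> kerZ A" "u \<noteq> (\<lambda>i. 0)" "E = supp (pos_part u)"
    unfolding Pk_def by blast
  obtain c where c: "is_circuit A c" "\<forall>i. c i > 0 \<longrightarrow> u i > 0" using conformal[OF u(1,2)] by blast
  have "supp (pos_part c) \<in> circuit_supports A" unfolding circuit_supports_def using c(1) by blast
  moreover have "supp (pos_part c) \<subseteq> E" unfolding u(3) supp_def pos_part_def using c(2) by (auto simp: not_le)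
  ultimately show ?thesis by blast
qed

theorem proposition2p6:
  fixes L :: "('n::finite \<Rightarrow> int) set"
    and A :: "'n \<Rightarrow> 'd::finite \<Rightarrow> int"
  assumes "is_lattice L"
    and "L \<noteq> {\<lambda>i. 0}"
    and "\<forall>u\<in>L. (\<forall>i. u i \<ge> 0) \<longrightarrow> u = (\<lambda>i. 0)"
    and "Sat L = kerZ A"
  shows "T_min L TYPE('k::field) = minimal_sets (circuit_supports A)"
proof -
  have "T_min L TYPE('k::field) = minimal_sets (Pset L)" by (rule T_min_Pset[OF assms(1)])
  also have "\<dots> = minimal_sets (Pk A)" by (simp add: Pset_Pk[OF assms(1,4)])
  also have "\<dots> = minimal_sets (circuit_supports A)"
    by (rule min_sets_eq[symmetric]) (use circ_in_Pk Pk_has_circ in blast)+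
  finally show ?thesis .
qed

end
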